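(* For every pair $X,Y$ of nominal sets, the sets $\mathrm{Kl}(\mathcal{P}_{\mathsf{fs}})(X,Y)$ and $\mathrm{Kl}(\mathcal{P}_{\mathsf{ufs}})(X,Y)$ of equivariant maps $X\to\mathcal{P}_{\mathsf{fs}}Y$, respectively $X\to\mathcal{P}_{\mathsf{ufs}}Y$, ordered pointwise by inclusion ($f\le g$ iff $f(x)\subseteq g(x)$ for all $x\in X$), form complete lattices (in particular dcpos with bottom).
   Context: Fix a countably infinite set $\mathbb{A}$ of names and let $\mathrm{Perm}(\mathbb{A})$ be the group of finite permutations of $\mathbb{A}$. A nominal set is a set $X$ with an action of $\mathrm{Perm}(\mathbb{A})$ such that every $x\in X$ has a finite support $S\subseteq\mathbb{A}$ (i.e. $\pi\cdot x=x$ whenever $\pi$ fixes $S$ pointwise); $\mathrm{supp}(x)$ denotes the least support. A map is equivariant if it commutes with the actions. A subset $A\subseteq X$ is finitely supported if it has a finite support for the action $\pi\cdot A=\{\pi\cdot x: x\in A\}$, and uniformly finitely supported if $\bigcup_{x\in A}\mathrm{supp}(x)$ is finite. $\mathcal{P}_{\mathsf{fs}}X$ (resp. $\mathcal{P}_{\mathsf{ufs}}X$) is the nominal set of finitely supported (resp. uniformly finitely supported) subsets of $X$; these are monads on the category $\mathsf{Nom}$ of nominal sets and equivariant maps, with unit $x\mapsto\{x\}$ and multiplication given by union. $\mathrm{Kl}(T)(X,Y)$ denotes the set of morphisms $X\to Y$ of the Kleisli category, i.e. equivariant maps $X\to TY$. *)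

theory Defs
  imports "HOL-Algebra.Complete_Lattice"
begin

text \<open>Names: we take the countably infinite set of names to be \<open>nat\<close>
(any countably infinite set is in bijection with it).
Finite permutations of the names.\<close>

definition finperm :: "(nat \<Rightarrow> nat) \<Rightarrow> bool" where
  "finperm p \<longleftrightarrow> bij p \<and> finite {a. p a \<noteq> a}"

definition supports :: "((nat \<Rightarrow> nat) \<Rightarrow> 'x \<Rightarrow> 'x) \<Rightarrow> nat set \<Rightarrow> 'x \<Rightarrow> bool" where
  "supports act S x \<longleftrightarrow> (\<forall>p. finperm p \<longrightarrow> (\<forall>a\<in>S. p a = a) \<longrightarrow> act p x = x)"

definition supp :: "((nat \<Rightarrow> nat) \<Rightarrow> 'x \<Rightarrow> 'x) \<Rightarrow> 'x \<Rightarrow> nat set" where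
  "supp act x = \<Inter> {S. finite S \<and> supports act S x}"

definition nominal_set :: "'x set \<Rightarrow> ((nat \<Rightarrow> nat) \<Rightarrow> 'x \<Rightarrow> 'x) \<Rightarrow> bool" where
  "nominal_set X act \<longleftrightarrow>
     (\<forall>p x. finperm p \<longrightarrow> x \<in> X \<longrightarrow> act p x \<in> X) \<and>
     (\<forall>x\<in>X. act id x = x) \<and>
     (\<forall>p q x. finperm p \<longrightarrow> finperm q \<longrightarrow> x \<in> X \<longrightarrow> act (p \<circ> q) x = act p (act q x)) \<and>
     (\<forall>x\<in>X. \<exists>S. finite S \<and> supports act S x)"

definition set_act :: "((nat \<Rightarrow> nat) \<Rightarrow> 'x \<Rightarrow> 'x) \<Rightarrow> (nat \<Rightarrow> nat) \<Rightarrow> 'x set \<Rightarrow> 'x set" where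
  "set_act act p A = act p ` A"

definition Pfs :: "'y set \<Rightarrow> ((nat \<Rightarrow> nat) \<Rightarrow> 'y \<Rightarrow> 'y) \<Rightarrow> 'y set set" where
  "Pfs Y act = {A. A \<subseteq> Y \<and> (\<exists>S. finite S \<and> supports (set_act act) S A)}"

definition Pufs :: "'y set \<Rightarrow> ((nat \<Rightarrow> nat) \<Rightarrow> 'y \<Rightarrow> 'y) \<Rightarrow> 'y set set" where
  "Pufs Y act = {A. A \<subseteq> Y \<and> finite (\<Union>y\<in>A. supp act y)}"

text \<open>Kleisli hom-sets: equivariant maps \<open>X \<rightarrow> T Y\<close> for \<open>T Y\<close> a set of subsets of \<open>Y\<close>
(with the pointwise action); maps are taken extensionally (value \<open>{}\<close> outside \<open>X\<close>).\<close>
definition Kl :: "'x set \<Rightarrow> ((nat \<Rightarrow> nat) \<Rightarrow> 'x \<Rightarrow> 'x) \<Rightarrow> 'y set set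
                  \<Rightarrow> ((nat \<Rightarrow> nat) \<Rightarrow> 'y \<Rightarrow> 'y) \<Rightarrow> ('x \<Rightarrow> 'y set) set" where
  "Kl X actX TY actY =
     {f. (\<forall>x\<in>X. f x \<in> TY) \<and> (\<forall>x. x \<notin> X \<longrightarrow> f x = {}) \<and>
         (\<forall>p x. finperm p \<longrightarrow> x \<in> X \<longrightarrow> f (actX p x) = set_act actY p (f x))}"

definition Kl_order :: "'x set \<Rightarrow> ('x \<Rightarrow> 'y set) set \<Rightarrow> ('x \<Rightarrow> 'y set) gorder" where
  "Kl_order X K = \<lparr>carrier = K, eq = (=), le = (\<lambda>f g. \<forall>x\<in>X. f x \<subseteq> g x)\<rparr>"

end

theory Submission
  imports Defs
begin

definition UF :: "'x set \<Rightarrow> ('x \<Rightarrow> 'y set) set \<Rightarrow> 'x \<Rightarrow> 'y set" where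
  "UF X F = (\<lambda>x. if x \<in> X then (\<Union>f\<in>F. f x) else {})"

lemma cl_gen:
  assumes extK: "\<And>f x. f \<in> K \<Longrightarrow> x \<notin> X \<Longrightarrow> f x = {}"
    and cl: "\<And>F. F \<subseteq> K \<Longrightarrow> UF X F \<in> K"
  shows "complete_lattice (Kl_order X K)"
proof -
  interpret partial_order "Kl_order X K"
  proof (unfold_locales, simp_all add: Kl_order_def)
    fix f g assume "\<forall>x\<in>X. f x \<subseteq> g x" "\<forall>x\<in>X. g x \<subseteq> f x" "f \<in> K" "g \<in> K"
    then show "f = g" using extK by (intro HOL.ext) (metis subset_antisym)
  next
    fix f g h assume "\<forall>x\<in>X. f x \<subseteq> g x" "\<forall>x\<in>X. g x \<subseteq> h x"
    then show "\<forall>x\<in>X. f x \<subseteq> h x" by blast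
  qed
  have sup: "least (Kl_order X K) (UF X A) (Upper (Kl_order X K) A)" if "A \<subseteq> K" for A
    using that cl[OF that]
    by (auto simp: least_def Upper_def Kl_order_def UF_def)
  show ?thesis
  proof (rule complete_latticeI)
    fix A assume A: "A \<subseteq> carrier (Kl_order X K)"
    then show "\<exists>s. least (Kl_order X K) s (Upper (Kl_order X K) A)"
      using sup by (auto simp: Kl_order_def)
  next
    fix A assume A: "A \<subseteq> carrier (Kl_order X K)"
    define B where "B = Lower (Kl_order X K) A"
    have BK: "B \<subseteq> K" by (auto simp: B_def Lower_def Kl_order_def)
    have l: "least (Kl_order X K) (UF X B) (Upper (Kl_order X K) B)" using sup[OF BK] .
    have "greatest (Kl_order X K) (UF X B) B"
    proof -
      have inU: "UF X B \<in> K" using cl[OF BK] .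
      have "UF X B \<in> B"
        using inU A unfolding B_def
        by (auto simp: Lower_def Kl_order_def UF_def)
      moreover have "\<forall>g\<in>B. le (Kl_order X K) g (UF X B)"
        using l BK by (auto simp: least_def Upper_def Kl_order_def)
      ultimately show ?thesis using BK by (simp add: greatest_def Kl_order_def)
    qed
    then show "\<exists>i. greatest (Kl_order X K) i (Lower (Kl_order X K) A)"
      unfolding B_def by blast
  qed
qed


definition tau :: "nat \<Rightarrow> nat \<Rightarrow> nat \<Rightarrow> nat" where
  "tau a b = (\<lambda>c. if c = a then b else if c = b then a else c)"

lemma tau_invol: "tau a b \<circ> tau a b = id"
  by (auto simp: tau_def)

lemma tau_finperm: "finperm (tau a b)"
proof -
  have "bij (tau a b)" using tau_invol by (metis o_bij)
  moreover have "{c. tau a b c \<noteq> c} \<subseteq> {a, b}" by (auto simp: tau_def)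
  moreover have "finite {a, b}" by simp
  ultimately show ?thesis unfolding finperm_def by (meson finite_subset)
qed

lemma finperm_conj:
  assumes "finperm t" "finperm q" "t \<circ> t = id"
  shows "finperm (t \<circ> q \<circ> t)"
proof -
  have "bij (t \<circ> q \<circ> t)" using assms by (auto simp: finperm_def intro: bij_comp)
  moreover have "{c. (t \<circ> q \<circ> t) c \<noteq> c} \<subseteq> {c. t c \<noteq> c} \<union> {c. q c \<noteq> c}"
    by auto
  moreover have "finite ({c. t c \<noteq> c} \<union> {c. q c \<noteq> c})" using assms by (simp add: finperm_def)
  ultimately show ?thesis unfolding finperm_def by (meson finite_subset)
qed

lemma finperm_comp:
  assumes "finperm p" "finperm q"
  shows "finperm (p \<circ> q)"
proof -
  have "bij (p \<circ> q)" using assms by (auto simp: finperm_def intro: bij_comp)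
  moreover have "{c. (p \<circ> q) c \<noteq> c} \<subseteq> {c. p c \<noteq> c} \<union> {c. q c \<noteq> c}"
    by auto
  moreover have "finite ({c. p c \<noteq> c} \<union> {c. q c \<noteq> c})" using assms by (simp add: finperm_def)
  ultimately show ?thesis unfolding finperm_def by (meson finite_subset)
qed

lemma finperm_id: "finperm id"
  by (simp add: finperm_def)

lemma supports_transport:
  assumes nom: "nominal_set Y act" and z: "z \<in> Y" and R: "supports act R z"
    and t: "finperm t" "t \<circ> t = id"
  shows "supports act (t ` R) (act t z)"
  unfolding supports_def
proof (intro allI impI)
  fix q assume q: "finperm q" "\<forall>a\<in>t ` R. q a = a"
  define q' where "q' = t \<circ> q \<circ> t"
  have fq': "finperm q'" unfolding q'_def using finperm_conj[OF t(1) q(1) t(2)] .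
  have "\<forall>r\<in>R. q' r = r"
  proof
    fix r assume "r \<in> R"
    then have "q (t r) = t r" using q by auto
    moreover have "t (t r) = r" using t(2) by (metis comp_apply id_apply)
    ultimately show "q' r = r" unfolding q'_def by simp
  qed
  then have z': "act q' z = z" using R fq' by (simp add: supports_def)
  have comp: "\<And>p1 p2 x. finperm p1 \<Longrightarrow> finperm p2 \<Longrightarrow> x \<in> Y \<Longrightarrow> act (p1 \<circ> p2) x = act p1 (act p2 x)"
    using nom by (simp add: nominal_set_def)
  have tt: "\<And>c. t (t c) = c" using t(2) by (metis comp_apply id_apply)
  have e: "t \<circ> q' = q \<circ> t" unfolding q'_def by (rule ext) (simp add: tt)
  have "act t z = act t (act q' z)" using z' by simp
  also have "\<dots> = act (t \<circ> q') z" using comp[OF t(1) fq' z] by simp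
  also have "\<dots> = act (q \<circ> t) z" using e by simp
  also have "\<dots> = act q (act t z)" using comp[OF q(1) t(1) z] .
  finally show "act q (act t z) = act t z" by simp
qed

lemma ufs_supp:
  assumes nom: "nominal_set Y act" and AY: "A \<subseteq> Y" and S: "finite S"
    and SA: "supports (set_act act) S A" and T: "finite (\<Union>y\<in>A. supp act y)"
    and y: "y \<in> A"
  shows "supp act y \<subseteq> S"
proof
  fix a assume a: "a \<in> supp act y"
  show "a \<in> S"
  proof (rule ccontr)
    assume aS: "a \<notin> S"
    let ?T = "\<Union>y\<in>A. supp act y"
    have "finite (S \<union> ?T \<union> {a})" using S T by simp
    then obtain b where b: "b \<notin> S \<union> ?T \<union> {a}"
      by (meson ex_new_if_finite infinite_UNIV_nat)
    let ?t = "tau a b"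
    have fix_S: "\<forall>c\<in>S. ?t c = c" using aS b by (auto simp: tau_def)
    have "set_act act ?t A = A" using SA fix_S tau_finperm by (simp add: supports_def)
    then have ty: "act ?t y \<in> A" using y by (auto simp: set_act_def)
    then have "b \<notin> supp act (act ?t y)" using b by auto
    then obtain R where R: "finite R" "supports act R (act ?t y)" "b \<notin> R"
      unfolding supp_def by blast
    have yY: "y \<in> Y" "act ?t y \<in> Y" using y ty AY by auto
    have "supports act (?t ` R) (act ?t (act ?t y))"
      using supports_transport[OF nom yY(2) R(2) tau_finperm tau_invol] .
    moreover have "act ?t (act ?t y) = y"
    proof -
      have "act ?t (act ?t y) = act (?t \<circ> ?t) y"
        using nom yY(1) tau_finperm by (simp add: nominal_set_def)
      also have "\<dots> = y" using nom yY(1) tau_invol by (simp add: nominal_set_def)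
      finally show ?thesis .
    qed
    ultimately have "supports act (?t ` R) y" by simp
    moreover have "finite (?t ` R)" using R by simp
    moreover have "a \<notin> ?t ` R"
    proof
      assume "a \<in> ?t ` R"
      then obtain r where "r \<in> R" "a = ?t r" by auto
      then show False using R(3) b by (auto simp: tau_def split: if_splits)
    qed
    ultimately show False using a unfolding supp_def by blast
  qed
qed


lemma Kl_supp:
  assumes "f \<in> Kl X actX TY actY" "x \<in> X" "supports actX S x"
  shows "supports (set_act actY) S (f x)"
  unfolding supports_def
proof (intro allI impI)
  fix p assume p: "finperm p" "\<forall>a\<in>S. p a = a"
  then have "actX p x = x" using assms(3) by (simp add: supports_def)
  moreover have "f (actX p x) = set_act actY p (f x)" using assms(1,2) p(1) by (simp add: Kl_def)
  ultimately show "set_act actY p (f x) = f x" by simp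
qed

lemma UF_equiv:
  assumes nX: "nominal_set X actX" and F: "F \<subseteq> Kl X actX TY actY"
    and p: "finperm p" and x: "x \<in> X"
  shows "UF X F (actX p x) = set_act actY p (UF X F x)"
proof -
  have px: "actX p x \<in> X" using nX p x by (simp add: nominal_set_def)
  have "\<And>f. f \<in> F \<Longrightarrow> f (actX p x) = set_act actY p (f x)"
    using F p x unfolding Kl_def by blast
  then show ?thesis using px x by (simp add: UF_def set_act_def image_UN)
qed

lemma UF_Pfs:
  assumes nX: "nominal_set X actX" and F: "F \<subseteq> Kl X actX (Pfs Y actY) actY"
  shows "UF X F \<in> Kl X actX (Pfs Y actY) actY"
proof -
  have "UF X F x \<in> Pfs Y actY" if x: "x \<in> X" for x
  proof -
    obtain S where S: "finite S" "supports actX S x" using nX x by (auto simp: nominal_set_def)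
    have fY: "f x \<subseteq> Y" if f: "f \<in> F" for f
    proof -
      have "f \<in> Kl X actX (Pfs Y actY) actY" using F f by blast
      then have "f x \<in> Pfs Y actY" using x by (simp add: Kl_def)
      then show ?thesis by (simp add: Pfs_def)
    qed
    have sub: "UF X F x \<subseteq> Y" using fY x by (auto simp: UF_def)
    have "supports (set_act actY) S (UF X F x)"
      unfolding supports_def
    proof (intro allI impI)
      fix p assume p: "finperm p" "\<forall>a\<in>S. p a = a"
      then have "actX p x = x" using S(2) by (simp add: supports_def)
      then show "set_act actY p (UF X F x) = UF X F x"
        using UF_equiv[OF nX F p(1) x] by simp
    qed
    then show ?thesis using sub S(1) by (auto simp: Pfs_def)
  qed
  moreover have "\<forall>x. x \<notin> X \<longrightarrow> UF X F x = {}" by (simp add: UF_def)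
  moreover have "\<forall>p x. finperm p \<longrightarrow> x \<in> X \<longrightarrow> UF X F (actX p x) = set_act actY p (UF X F x)"
    using UF_equiv[OF nX F] by blast
  ultimately show ?thesis unfolding Kl_def by blast
qed

lemma UF_Pufs:
  assumes nX: "nominal_set X actX" and nY: "nominal_set Y actY"
    and F: "F \<subseteq> Kl X actX (Pufs Y actY) actY"
  shows "UF X F \<in> Kl X actX (Pufs Y actY) actY"
proof -
  have "UF X F x \<in> Pufs Y actY" if x: "x \<in> X" for x
  proof -
    obtain S where S: "finite S" "supports actX S x" using nX x by (auto simp: nominal_set_def)
    have fY: "f x \<subseteq> Y" if f: "f \<in> F" for f
    proof -
      have "f \<in> Kl X actX (Pufs Y actY) actY" using F f by blast
      then have "f x \<in> Pufs Y actY" using x by (simp add: Kl_def)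
      then show ?thesis by (simp add: Pufs_def)
    qed
    have sub: "UF X F x \<subseteq> Y" using fY x by (auto simp: UF_def)
    have "(\<Union>y\<in>UF X F x. supp actY y) \<subseteq> S"
    proof (intro UN_least)
      fix y assume "y \<in> UF X F x"
      then obtain f where f: "f \<in> F" "y \<in> f x" using x by (auto simp: UF_def)
      have fK: "f \<in> Kl X actX (Pufs Y actY) actY" using f F by blast
      then have fx: "f x \<in> Pufs Y actY" using x by (simp add: Kl_def)
      show "supp actY y \<subseteq> S"
        using ufs_supp[OF nY _ S(1) Kl_supp[OF fK x S(2)] _ f(2)] fx
        by (simp add: Pufs_def)
    qed
    then show ?thesis using sub S(1) by (auto simp: Pufs_def intro: finite_subset)
  qed
  moreover have "\<forall>x. x \<notin> X \<longrightarrow> UF X F x = {}" by (simp add: UF_def)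
  moreover have "\<forall>p x. finperm p \<longrightarrow> x \<in> X \<longrightarrow> UF X F (actX p x) = set_act actY p (UF X F x)"
    using UF_equiv[OF nX F] by blast
  ultimately show ?thesis unfolding Kl_def by blast
qed

theorem proposition3p7:
  fixes X :: "'x set" and actX :: "(nat \<Rightarrow> nat) \<Rightarrow> 'x \<Rightarrow> 'x"
    and Y :: "'y set" and actY :: "(nat \<Rightarrow> nat) \<Rightarrow> 'y \<Rightarrow> 'y"
  assumes "nominal_set X actX" and "nominal_set Y actY"
  shows "complete_lattice (Kl_order X (Kl X actX (Pfs Y actY) actY)) \<and>
         complete_lattice (Kl_order X (Kl X actX (Pufs Y actY) actY))"
proof
  show "complete_lattice (Kl_order X (Kl X actX (Pfs Y actY) actY))"
  proof (rule cl_gen)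
    show "\<And>f x. f \<in> Kl X actX (Pfs Y actY) actY \<Longrightarrow> x \<notin> X \<Longrightarrow> f x = {}" by (simp add: Kl_def)
    show "\<And>F. F \<subseteq> Kl X actX (Pfs Y actY) actY \<Longrightarrow> UF X F \<in> Kl X actX (Pfs Y actY) actY"
      by (rule UF_Pfs[OF assms(1)])
  qed
  show "complete_lattice (Kl_order X (Kl X actX (Pufs Y actY) actY))"
  proof (rule cl_gen)
    show "\<And>f x. f \<in> Kl X actX (Pufs Y actY) actY \<Longrightarrow> x \<notin> X \<Longrightarrow> f x = {}" by (simp add: Kl_def)
    show "\<And>F. F \<subseteq> Kl X actX (Pufs Y actY) actY \<Longrightarrow> UF X F \<in> Kl X actX (Pufs Y actY) actY"
      by (rule UF_Pufs[OF assms])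
  qed
qed

end
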